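(* Let $n$ be a positive integer, $F$ a finite set of cardinality $n$ and $\sigma : F \to F$ a map. (i) For every $a \in F$ there exist nonnegative integers $k, l$ with $l \ge 1$, $\sigma^k(a) = \sigma^{k+l}(a)$ and $k + l \le n$. (ii) For every $a \in F$, if $\sigma^{k_i}(a) = \sigma^{k_i + l_i}(a)$ for $i = 1,2$ (with $k_i \ge 0$, $l_i \ge 1$), then $\sigma^k(a) = \sigma^{k+l}(a)$ for $(k,l) = (\min\{k_1,k_2\}, \gcd\{l_1,l_2\})$. (iii) For every $a \in F$ there is a unique pair $(k_a, l_a)$ of a nonnegative integer $k_a$ and a positive integer $l_a$ such that for all integers $k' \ge 0$, $l' \ge 1$: $\sigma^{k'}(a) = \sigma^{k'+l'}(a)$ if and only if $k_a \le k'$ and $l_a \mid l'$. (iv) Let $K = \max_{a \in F} k_a$ and $L = \operatorname{lcm}_{a \in F} l_a$. Then for all integers $K' \ge 0$, $L' \ge 1$: $\sigma^{K'} = \sigma^{K'+L'}$ if and only if $K \le K'$ and $L \mid L'$. (v) $K + \alpha(L) \le n$.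
   Context: $\sigma^k$ denotes the $k$-th iterate of $\sigma$ ($\sigma^0 = \mathrm{id}$). The function $\alpha : \mathbb{N} \to \mathbb{N}$ is defined by $\alpha(m) = \max\{p^e : p \text{ prime}, e \ge 0, p^e \mid m\}$, the largest prime-power divisor of $m$ (with $\alpha(1) = 1$). *)

theory Defs
  imports "HOL-Computational_Algebra.Primes"
begin

definition alpha :: "nat \<Rightarrow> nat" where
  "alpha m = Max {q. \<exists>p e. prime p \<and> q = p ^ e \<and> q dvd m}"

definition is_tail_period :: "('a \<Rightarrow> 'a) \<Rightarrow> 'a \<Rightarrow> nat \<Rightarrow> nat \<Rightarrow> bool" where
  "is_tail_period \<sigma> a k l \<longleftrightarrow> l \<ge> 1 \<and>
     (\<forall>k' l'. l' \<ge> 1 \<longrightarrow> ((\<sigma> ^^ k') a = (\<sigma> ^^ (k' + l')) a \<longleftrightarrow> k \<le> k' \<and> l dvd l'))"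

definition tail_period :: "('a \<Rightarrow> 'a) \<Rightarrow> 'a \<Rightarrow> nat \<times> nat" where
  "tail_period \<sigma> a = (THE (k, l). is_tail_period \<sigma> a k l)"

definition k_of :: "('a \<Rightarrow> 'a) \<Rightarrow> 'a \<Rightarrow> nat" where
  "k_of \<sigma> a = fst (tail_period \<sigma> a)"

definition l_of :: "('a \<Rightarrow> 'a) \<Rightarrow> 'a \<Rightarrow> nat" where
  "l_of \<sigma> a = snd (tail_period \<sigma> a)"

end

theory Submission
  imports Defs
begin

lemma pp_dvd_Lcm:
  fixes A :: "nat set"
  assumes "finite A" "0 \<notin> A" "prime p" "e > 0"
  shows "p ^ e dvd Lcm A \<Longrightarrow> \<exists>x\<in>A. p ^ e dvd x"
  using assms(1,2)
proof (induction A rule: finite_induct)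
  case empty
  then show ?case using assms(3,4) by (simp add: prime_gt_Suc_0_nat)
next
  case (insert x A)
  have x0: "x \<noteq> 0" using insert by auto
  have L0: "Lcm A \<noteq> 0" using insert by (auto simp: Lcm_0_iff)
  have nu: "\<not> is_unit p" using assms(3) by auto
  have "e \<le> multiplicity p (lcm x (Lcm A))"
    using insert(4) power_dvd_iff_le_multiplicity[of "lcm x (Lcm A)" p e] x0 L0 nu
    by (simp add: lcm_eq_0_iff)
  then have "e \<le> multiplicity p x \<or> e \<le> multiplicity p (Lcm A)"
    using multiplicity_lcm[OF x0 L0 assms(3)] by auto
  then show ?case
  proof
    assume "e \<le> multiplicity p x"
    then have "p ^ e dvd x" using power_dvd_iff_le_multiplicity[of x p e] x0 nu by simp
    then show ?thesis by auto
  next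
    assume "e \<le> multiplicity p (Lcm A)"
    then have "p ^ e dvd Lcm A" using power_dvd_iff_le_multiplicity[of "Lcm A" p e] L0 nu by simp
    then show ?thesis using insert by auto
  qed
qed

lemma tpD:
  fixes \<sigma> :: "'a \<Rightarrow> 'a"
  assumes "is_tail_period \<sigma> a k l" "l' \<ge> 1"
  shows "(\<sigma> ^^ k') a = (\<sigma> ^^ (k' + l')) a \<longleftrightarrow> k \<le> k' \<and> l dvd l'"
  using assms unfolding is_tail_period_def by blast

lemma tp_l1:
  fixes \<sigma> :: "'a \<Rightarrow> 'a"
  assumes "is_tail_period \<sigma> a k l"
  shows "l \<ge> 1"
  using assms unfolding is_tail_period_def by simp

lemma per_shift:
  fixes \<sigma> :: "'a \<Rightarrow> 'a"
  assumes "(\<sigma> ^^ k) a = (\<sigma> ^^ (k + l)) a" "k \<le> m"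
  shows "(\<sigma> ^^ m) a = (\<sigma> ^^ (m + l)) a"
proof -
  have m: "m = (m - k) + k" "m + l = (m - k) + (k + l)" using assms(2) by simp_all
  have "(\<sigma> ^^ m) a = (\<sigma> ^^ (m - k)) ((\<sigma> ^^ k) a)"
    by (subst m(1)) (simp add: funpow_add)
  also have "\<dots> = (\<sigma> ^^ (m - k)) ((\<sigma> ^^ (k + l)) a)" using assms(1) by simp
  also have "\<dots> = (\<sigma> ^^ (m + l)) a"
    by (subst m(2)) (simp add: funpow_add)
  finally show ?thesis .
qed

lemma per_mult:
  fixes \<sigma> :: "'a \<Rightarrow> 'a"
  assumes "(\<sigma> ^^ k) a = (\<sigma> ^^ (k + l)) a"
  shows "(\<sigma> ^^ k) a = (\<sigma> ^^ (k + t * l)) a"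
proof (induction t)
  case 0
  then show ?case by simp
next
  case (Suc t)
  have "(\<sigma> ^^ (k + t * l)) a = (\<sigma> ^^ (k + t * l + l)) a"
    using per_shift[OF assms, of "k + t * l"] by simp
  moreover have "k + Suc t * l = k + t * l + l" by simp
  ultimately show ?case using Suc by metis
qed

lemma per_gen:
  fixes \<sigma> :: "'a \<Rightarrow> 'a"
  assumes "(\<sigma> ^^ k) a = (\<sigma> ^^ (k + l)) a" "k \<le> m"
  shows "(\<sigma> ^^ m) a = (\<sigma> ^^ (m + t * l)) a"
  using per_mult[OF per_shift[OF assms]] .

lemma part2:
  fixes \<sigma> :: "'a \<Rightarrow> 'a"
  assumes "l1 \<ge> 1" "l2 \<ge> 1" "(\<sigma> ^^ k1) a = (\<sigma> ^^ (k1 + l1)) a"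
    "(\<sigma> ^^ k2) a = (\<sigma> ^^ (k2 + l2)) a" "k1 \<le> k2"
  shows "(\<sigma> ^^ k1) a = (\<sigma> ^^ (k1 + gcd l1 l2)) a"
proof -
  have big: "k2 \<le> k1 + k2 * l1" using assms(1) by (simp add: trans_le_add2)
  have P2: "(\<sigma> ^^ k1) a = (\<sigma> ^^ (k1 + l2)) a"
  proof -
    have "(\<sigma> ^^ (k1 + l2)) a = (\<sigma> ^^ (k1 + l2 + k2 * l1)) a"
      using per_gen[OF assms(3), of "k1 + l2" k2] by simp
    also have "\<dots> = (\<sigma> ^^ (k1 + k2 * l1 + l2)) a" by (simp add: ac_simps)
    also have "\<dots> = (\<sigma> ^^ (k1 + k2 * l1)) a"
      using per_shift[OF assms(4) big] by simp
    also have "\<dots> = (\<sigma> ^^ k1) a" using per_mult[OF assms(3), of k2] by simp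
    finally show ?thesis by simp
  qed
  obtain x y where xy: "l1 * x = l2 * y + gcd l1 l2" using bezout_nat[of l1 l2] assms(1) by auto
  have "(\<sigma> ^^ (k1 + gcd l1 l2)) a = (\<sigma> ^^ (k1 + gcd l1 l2 + y * l2)) a"
    using per_gen[OF P2, of "k1 + gcd l1 l2" y] by simp
  also have "\<dots> = (\<sigma> ^^ (k1 + x * l1)) a" using xy by (simp add: ac_simps)
  also have "\<dots> = (\<sigma> ^^ k1) a" using per_mult[OF assms(3), of x] by simp
  finally show ?thesis by simp
qed

lemma part2':
  fixes \<sigma> :: "'a \<Rightarrow> 'a"
  assumes "l1 \<ge> 1" "l2 \<ge> 1" "(\<sigma> ^^ k1) a = (\<sigma> ^^ (k1 + l1)) a"
    "(\<sigma> ^^ k2) a = (\<sigma> ^^ (k2 + l2)) a"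
  shows "(\<sigma> ^^ (min k1 k2)) a = (\<sigma> ^^ (min k1 k2 + gcd l1 l2)) a"
proof (cases "k1 \<le> k2")
  case True
  then show ?thesis using part2[OF assms True] by simp
next
  case False
  then show ?thesis using part2[OF assms(2,1,4,3)] by (simp add: gcd.commute)
qed

lemma tp_unique:
  fixes \<sigma> :: "'a \<Rightarrow> 'a"
  assumes "is_tail_period \<sigma> a k l" "is_tail_period \<sigma> a k2 l2"
  shows "k = k2 \<and> l = l2"
proof -
  have l: "l \<ge> 1" "l2 \<ge> 1" using tp_l1[OF assms(1)] tp_l1[OF assms(2)] by auto
  have "(\<sigma> ^^ k) a = (\<sigma> ^^ (k + l)) a" using tpD[OF assms(1) l(1), of k] by simp
  then have 1: "k2 \<le> k \<and> l2 dvd l" using tpD[OF assms(2) l(1), of k] by simp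
  have "(\<sigma> ^^ k2) a = (\<sigma> ^^ (k2 + l2)) a" using tpD[OF assms(2) l(2), of k2] by simp
  then have 2: "k \<le> k2 \<and> l dvd l2" using tpD[OF assms(1) l(2), of k2] by simp
  show ?thesis using 1 2 dvd_antisym by auto
qed

lemma tp_exists:
  fixes \<sigma> :: "'a \<Rightarrow> 'a"
  assumes "l0 \<ge> 1" "(\<sigma> ^^ k0) a = (\<sigma> ^^ (k0 + l0)) a"
  shows "\<exists>k l. is_tail_period \<sigma> a k l \<and> k \<le> k0 \<and> l \<le> l0"
proof -
  define k where "k = (LEAST k. \<exists>l\<ge>1. (\<sigma> ^^ k) a = (\<sigma> ^^ (k + l)) a)"
  have ek: "\<exists>l\<ge>1. (\<sigma> ^^ k) a = (\<sigma> ^^ (k + l)) a"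
    unfolding k_def by (rule LeastI[of _ k0]) (use assms in auto)
  have kmin: "\<And>k' l'. l' \<ge> 1 \<Longrightarrow> (\<sigma> ^^ k') a = (\<sigma> ^^ (k' + l')) a \<Longrightarrow> k \<le> k'"
    unfolding k_def by (rule Least_le) auto
  define l where "l = (LEAST l. l \<ge> 1 \<and> (\<sigma> ^^ k) a = (\<sigma> ^^ (k + l)) a)"
  obtain l1 where l1: "l1 \<ge> 1" "(\<sigma> ^^ k) a = (\<sigma> ^^ (k + l1)) a" using ek by auto
  have el: "l \<ge> 1 \<and> (\<sigma> ^^ k) a = (\<sigma> ^^ (k + l)) a"
    unfolding l_def by (rule LeastI[of _ l1]) (use l1 in auto)
  have lmin: "\<And>l'. l' \<ge> 1 \<Longrightarrow> (\<sigma> ^^ k) a = (\<sigma> ^^ (k + l')) a \<Longrightarrow> l \<le> l'"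
    unfolding l_def by (rule Least_le) auto
  have tp: "is_tail_period \<sigma> a k l"
    unfolding is_tail_period_def
  proof (intro conjI allI impI iffI)
    show "1 \<le> l" using el by auto
  next
    fix k' l' :: nat
    assume l': "1 \<le> l'" and P: "(\<sigma> ^^ k') a = (\<sigma> ^^ (k' + l')) a"
    show "k \<le> k'" using kmin[OF l' P] .
    then have "min k' k = k" by simp
    then have "(\<sigma> ^^ k) a = (\<sigma> ^^ (k + gcd l' l)) a"
      using part2'[OF l' _ P, of l k] el by auto
    moreover have "gcd l' l \<ge> 1" using l' by (simp add: Suc_le_eq)
    ultimately have "l \<le> gcd l' l" using lmin by auto
    moreover have "gcd l' l \<le> l" using el by (simp add: Suc_le_eq)
    ultimately have "gcd l' l = l" by simp
    then show "l dvd l'" by (metis gcd_dvd1)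
  next
    fix k' l' :: nat
    assume "1 \<le> l'" "k \<le> k' \<and> l dvd l'"
    then obtain t where "l' = t * l" "k \<le> k'" by (auto elim: dvdE simp: mult.commute)
    then show "(\<sigma> ^^ k') a = (\<sigma> ^^ (k' + l')) a" using per_gen[where \<sigma>=\<sigma> and k=k and a=a and l=l and m=k' and t=t] el by auto
  qed
  have "k \<le> k0" using kmin[OF assms] .
  moreover have "l \<le> l0"
  proof -
    have "l dvd l0" using tpD[OF tp assms(1), of k0] assms(2) by simp
    then show ?thesis using assms(1) by (simp add: dvd_imp_le)
  qed
  ultimately show ?thesis using tp by blast
qed

lemma tp_eq:
  fixes \<sigma> :: "'a \<Rightarrow> 'a"
  assumes "is_tail_period \<sigma> a k l"
  shows "k_of \<sigma> a = k" "l_of \<sigma> a = l"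
proof -
  have "tail_period \<sigma> a = (k, l)"
    unfolding tail_period_def
    by (rule the_equality) (use assms in \<open>auto dest: tp_unique[OF _ assms]\<close>)
  then show "k_of \<sigma> a = k" "l_of \<sigma> a = l" unfolding k_of_def l_of_def by auto
qed

lemma fp_shift:
  fixes \<sigma> :: "'a \<Rightarrow> 'a"
  shows "(\<sigma> ^^ (m + l)) a = (\<sigma> ^^ l) ((\<sigma> ^^ m) a)"
  by (metis add.commute comp_apply funpow_add)

lemma inj_aux:
  fixes \<sigma> :: "'a \<Rightarrow> 'a"
  assumes "is_tail_period \<sigma> a k l" "c + N \<le> k + l" "i < j" "j < N"
  shows "(\<sigma> ^^ (c + i)) a \<noteq> (\<sigma> ^^ (c + j)) a"
proof
  assume eq: "(\<sigma> ^^ (c + i)) a = (\<sigma> ^^ (c + j)) a"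
  have "(\<sigma> ^^ (c + i)) a = (\<sigma> ^^ (c + i + (j - i))) a" using eq assms(3) by simp
  moreover have "j - i \<ge> 1" using assms(3) by simp
  ultimately have kl: "k \<le> c + i \<and> l dvd (j - i)" using tpD[OF assms(1) \<open>j - i \<ge> 1\<close>, of "c + i"] by simp
  moreover have "j - i < l" using assms kl by linarith
  ultimately show False using assms(3) by (simp add: nat_dvd_not_less)
qed

lemma inj_orb:
  fixes \<sigma> :: "'a \<Rightarrow> 'a"
  assumes "is_tail_period \<sigma> a k l" "c + N \<le> k + l"
  shows "inj_on (\<lambda>i. (\<sigma> ^^ (c + i)) a) {..<N}"
  unfolding inj_on_def
proof (intro ballI impI)
  fix i j assume ij: "i \<in> {..<N}" "j \<in> {..<N}" and eq: "(\<sigma> ^^ (c + i)) a = (\<sigma> ^^ (c + j)) a"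
  show "i = j"
  proof (rule linorder_cases[of i j])
    assume "i < j" then show ?thesis using inj_aux[OF assms, of i j] ij eq by auto
  next
    assume "j < i" then show ?thesis using inj_aux[OF assms, of j i] ij eq by auto
  qed
qed

lemma orbit_in:
  fixes \<sigma> :: "'a \<Rightarrow> 'a"
  assumes "\<forall>x\<in>F. \<sigma> x \<in> F" "a \<in> F"
  shows "(\<sigma> ^^ i) a \<in> F"
  by (induction i) (use assms in auto)

lemma part1:
  fixes \<sigma> :: "'a \<Rightarrow> 'a"
  assumes "finite F" "card F = n" "\<forall>x\<in>F. \<sigma> x \<in> F" "a \<in> F"
  shows "\<exists>k l. l \<ge> 1 \<and> (\<sigma> ^^ k) a = (\<sigma> ^^ (k + l)) a \<and> k + l \<le> n"
proof -
  have "(\<lambda>i. (\<sigma> ^^ i) a) ` {..n} \<subseteq> F" using orbit_in[OF assms(3,4)] by auto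
  then have "card ((\<lambda>i. (\<sigma> ^^ i) a) ` {..n}) \<le> n"
    using assms(1,2) card_mono by blast
  then have "\<not> inj_on (\<lambda>i. (\<sigma> ^^ i) a) {..n}"
    using card_image[of "\<lambda>i. (\<sigma> ^^ i) a" "{..n}"] by auto
  then obtain i j where ij: "i \<le> n" "j \<le> n" "i \<noteq> j" "(\<sigma> ^^ i) a = (\<sigma> ^^ j) a"
    unfolding inj_on_def by auto
  show ?thesis
  proof (cases "i < j")
    case True
    then show ?thesis using ij by (intro exI[of _ i] exI[of _ "j - i"]) auto
  next
    case False
    then show ?thesis using ij by (intro exI[of _ j] exI[of _ "i - j"]) auto
  qed
qed

lemma cyc_bound:
  fixes \<sigma> :: "'a \<Rightarrow> 'a"
  assumes F: "finite F" "card F = n" "\<forall>x\<in>F. \<sigma> x \<in> F" "a \<in> F" "b \<in> F"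
    and A: "is_tail_period \<sigma> a ka la" and B: "is_tail_period \<sigma> b kb lb"
    and n: "ka + la \<le> n"
  shows "ka + lb \<le> n"
proof -
  define Orb where "Orb = (\<lambda>i. (\<sigma> ^^ (0 + i)) a) ` {..<ka+la}"
  define Cyc where "Cyc = (\<lambda>i. (\<sigma> ^^ (kb + i)) b) ` {..<lb}"
  have cO: "card Orb = ka + la" unfolding Orb_def
    using card_image[OF inj_orb[OF A, of 0 "ka+la"]] by simp
  have cC: "card Cyc = lb" unfolding Cyc_def
    using card_image[OF inj_orb[OF B, of kb lb]] by simp
  have sub: "Orb \<subseteq> F" "Cyc \<subseteq> F" unfolding Orb_def Cyc_def using orbit_in[OF F(3)] F(4,5) by auto
  have la1: "la \<ge> 1" "lb \<ge> 1" using tp_l1[OF A] tp_l1[OF B] by auto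
  show ?thesis
  proof (cases "Orb \<inter> Cyc = {}")
    case True
    have fo: "finite Orb" "finite Cyc" using finite_subset[OF sub(1) F(1)] finite_subset[OF sub(2) F(1)] .
    have "card (Orb \<union> Cyc) = ka + la + lb"
      using card_Un_disjoint[OF fo True] cO cC by simp
    moreover have "card (Orb \<union> Cyc) \<le> n" using card_mono[OF F(1) Un_least[OF sub]] F(2) by simp
    ultimately show ?thesis by simp
  next
    case False
    then obtain i j where ij: "i < ka + la" "j < lb" "(\<sigma> ^^ i) a = (\<sigma> ^^ (kb + j)) b"
      unfolding Orb_def Cyc_def by auto
    define x where "x = (\<sigma> ^^ i) a"
    have "(\<sigma> ^^ (kb + j)) b = (\<sigma> ^^ (kb + j + lb)) b"
      using tpD[OF B la1(2), of "kb + j"] by simp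
    then have "x = (\<sigma> ^^ lb) x"
      unfolding x_def using ij(3) fp_shift[where \<sigma>=\<sigma> and m="kb+j" and l=lb and a=b] by simp
    then have "(\<sigma> ^^ i) a = (\<sigma> ^^ (i + lb)) a"
      unfolding x_def using fp_shift[where \<sigma>=\<sigma> and m=i and l=lb and a=a] by simp
    then have 1: "ka \<le> i \<and> la dvd lb" using tpD[OF A la1(2)] by blast
    then have "(\<sigma> ^^ i) a = (\<sigma> ^^ (i + la)) a" using tpD[OF A la1(1), of i] by simp
    then have "x = (\<sigma> ^^ la) x"
      unfolding x_def using fp_shift[where \<sigma>=\<sigma> and m=i and l=la and a=a] by simp
    then have "(\<sigma> ^^ (kb + j)) b = (\<sigma> ^^ (kb + j + la)) b"
      unfolding x_def using ij(3) fp_shift[where \<sigma>=\<sigma> and m="kb+j" and l=la and a=b] by simp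
    then have "lb dvd la" using tpD[OF B la1(1)] by blast
    then have "la = lb" using 1 dvd_antisym by blast
    then show ?thesis using n by simp
  qed
qed

theorem lemma3p1:
  fixes F :: "'a set" and \<sigma> :: "'a \<Rightarrow> 'a" and n :: nat
  assumes "n \<ge> 1" and "finite F" and "card F = n" and "\<forall>x\<in>F. \<sigma> x \<in> F"
  shows
    "(\<forall>a\<in>F. \<exists>k l. l \<ge> 1 \<and> (\<sigma> ^^ k) a = (\<sigma> ^^ (k + l)) a \<and> k + l \<le> n)
   \<and> (\<forall>a\<in>F. \<forall>k1 l1 k2 l2. l1 \<ge> 1 \<and> l2 \<ge> 1 \<and>
          (\<sigma> ^^ k1) a = (\<sigma> ^^ (k1 + l1)) a \<and> (\<sigma> ^^ k2) a = (\<sigma> ^^ (k2 + l2)) a \<longrightarrow>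
          (\<sigma> ^^ (min k1 k2)) a = (\<sigma> ^^ (min k1 k2 + gcd l1 l2)) a)
   \<and> (\<forall>a\<in>F. \<exists>!(k, l). l \<ge> 1 \<and>
          (\<forall>k' l'. l' \<ge> 1 \<longrightarrow> ((\<sigma> ^^ k') a = (\<sigma> ^^ (k' + l')) a \<longleftrightarrow> k \<le> k' \<and> l dvd l')))
   \<and> (\<forall>K' L'. L' \<ge> 1 \<longrightarrow>
          ((\<forall>x\<in>F. (\<sigma> ^^ K') x = (\<sigma> ^^ (K' + L')) x) \<longleftrightarrow>
           Max (k_of \<sigma> ` F) \<le> K' \<and> Lcm (l_of \<sigma> ` F) dvd L'))
   \<and> Max (k_of \<sigma> ` F) + alpha (Lcm (l_of \<sigma> ` F)) \<le> n"
proof -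
  have P1: "\<forall>a\<in>F. \<exists>k l. l \<ge> 1 \<and> (\<sigma> ^^ k) a = (\<sigma> ^^ (k + l)) a \<and> k + l \<le> n"
    using part1[OF assms(2-4)] by blast
  have TP: "\<And>a. a \<in> F \<Longrightarrow> is_tail_period \<sigma> a (k_of \<sigma> a) (l_of \<sigma> a)
      \<and> k_of \<sigma> a + l_of \<sigma> a \<le> n"
  proof -
    fix a assume a: "a \<in> F"
    obtain k0 l0 where kl0: "l0 \<ge> 1" "(\<sigma> ^^ k0) a = (\<sigma> ^^ (k0 + l0)) a" "k0 + l0 \<le> n"
      using P1 a by blast
    obtain k l where "is_tail_period \<sigma> a k l" "k \<le> k0" "l \<le> l0"
      using tp_exists[OF kl0(1,2)] by blast
    then show "?thesis a" using tp_eq[of \<sigma> a k l] kl0 by auto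
  qed
  have P3: "\<forall>a\<in>F. \<exists>!(k, l). l \<ge> 1 \<and>
          (\<forall>k' l'. l' \<ge> 1 \<longrightarrow> ((\<sigma> ^^ k') a = (\<sigma> ^^ (k' + l')) a \<longleftrightarrow> k \<le> k' \<and> l dvd l'))"
  proof
    fix a assume a: "a \<in> F"
    show "\<exists>!(k, l). l \<ge> 1 \<and>
          (\<forall>k' l'. l' \<ge> 1 \<longrightarrow> ((\<sigma> ^^ k') a = (\<sigma> ^^ (k' + l')) a \<longleftrightarrow> k \<le> k' \<and> l dvd l'))"
      unfolding is_tail_period_def[symmetric]
    proof (rule ex1I[of _ "(k_of \<sigma> a, l_of \<sigma> a)"])
      show "case (k_of \<sigma> a, l_of \<sigma> a) of (k, l) \<Rightarrow> is_tail_period \<sigma> a k l"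
        using TP[OF a] by simp
    next
      fix y assume "case y of (k, l) \<Rightarrow> is_tail_period \<sigma> a k l"
      then obtain k l where y: "y = (k, l)" "is_tail_period \<sigma> a k l" by (cases y) auto
      then show "y = (k_of \<sigma> a, l_of \<sigma> a)" using tp_eq[OF y(2)] by simp
    qed
  qed
  have Fne: "F \<noteq> {}" using assms(1,3) by auto
  have fin: "finite (k_of \<sigma> ` F)" "finite (l_of \<sigma> ` F)" using assms(2) by auto
  have P4: "\<forall>K' L'. L' \<ge> 1 \<longrightarrow>
          ((\<forall>x\<in>F. (\<sigma> ^^ K') x = (\<sigma> ^^ (K' + L')) x) \<longleftrightarrow>
           Max (k_of \<sigma> ` F) \<le> K' \<and> Lcm (l_of \<sigma> ` F) dvd L')"
  proof (intro allI impI)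
    fix K' L' :: nat assume L': "L' \<ge> 1"
    have "(\<forall>x\<in>F. (\<sigma> ^^ K') x = (\<sigma> ^^ (K' + L')) x) \<longleftrightarrow>
          (\<forall>x\<in>F. k_of \<sigma> x \<le> K' \<and> l_of \<sigma> x dvd L')"
      by (rule ball_cong[OF refl], rule tpD[OF conjunct1[OF TP] L'], assumption)
    also have "\<dots> \<longleftrightarrow> Max (k_of \<sigma> ` F) \<le> K' \<and> Lcm (l_of \<sigma> ` F) dvd L'"
      using fin Fne by (auto simp: Lcm_dvd_iff)
    finally show "(\<forall>x\<in>F. (\<sigma> ^^ K') x = (\<sigma> ^^ (K' + L')) x) \<longleftrightarrow>
           Max (k_of \<sigma> ` F) \<le> K' \<and> Lcm (l_of \<sigma> ` F) dvd L'" .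
  qed
  have P5: "Max (k_of \<sigma> ` F) + alpha (Lcm (l_of \<sigma> ` F)) \<le> n"
  proof -
    obtain a where a: "a \<in> F" "Max (k_of \<sigma> ` F) = k_of \<sigma> a"
      using Max_in[OF fin(1)] Fne by auto
    define L where "L = Lcm (l_of \<sigma> ` F)"
    have l1: "\<And>x. x \<in> F \<Longrightarrow> l_of \<sigma> x \<ge> 1" using tp_l1[OF conjunct1[OF TP]] by blast
    have nz: "0 \<notin> l_of \<sigma> ` F" using l1 by fastforce
    have L0: "L \<noteq> 0" unfolding L_def using Lcm_0_iff[OF fin(2)] nz by simp
    define S where "S = {q. \<exists>p e. prime p \<and> q = p ^ e \<and> q dvd L}"
    have "S \<subseteq> {..L}" unfolding S_def using L0 dvd_imp_le by auto
    then have finS: "finite S" using finite_subset by blast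
    have "1 \<in> S" unfolding S_def by (rule CollectI, rule exI[of _ 2], rule exI[of _ 0]) simp
    then have "alpha L \<in> S" unfolding alpha_def S_def[symmetric] using finS Max_in by blast
    then obtain p e where pe: "prime p" "alpha L = p ^ e" "p ^ e dvd L" unfolding S_def by auto
    have ka: "k_of \<sigma> a + l_of \<sigma> a \<le> n" using TP[OF a(1)] by simp
    have "k_of \<sigma> a + p ^ e \<le> n"
    proof (cases "e = 0")
      case True
      then show ?thesis using ka l1[OF a(1)] by simp
    next
      case False
      then have e0: "e > 0" by simp
      have "\<exists>x\<in>l_of \<sigma> ` F. p ^ e dvd x"
        by (rule pp_dvd_Lcm[OF fin(2) nz pe(1) e0]) (use pe(3) in \<open>simp add: L_def\<close>)
      then obtain b where b: "b \<in> F" "p ^ e dvd l_of \<sigma> b" by blast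
      have "p ^ e \<le> l_of \<sigma> b" using b l1[OF b(1)] by (intro dvd_imp_le) auto
      moreover have "k_of \<sigma> a + l_of \<sigma> b \<le> n"
        using cyc_bound[OF assms(2,3,4) a(1) b(1)] TP a(1) b(1) ka by blast
      ultimately show ?thesis by simp
    qed
    then show ?thesis using a pe unfolding L_def by simp
  qed
  have P2: "\<forall>a\<in>F. \<forall>k1 l1 k2 l2. l1 \<ge> 1 \<and> l2 \<ge> 1 \<and>
          (\<sigma> ^^ k1) a = (\<sigma> ^^ (k1 + l1)) a \<and> (\<sigma> ^^ k2) a = (\<sigma> ^^ (k2 + l2)) a \<longrightarrow>
          (\<sigma> ^^ (min k1 k2)) a = (\<sigma> ^^ (min k1 k2 + gcd l1 l2)) a"
  proof (intro ballI allI impI)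
    fix a k1 l1 k2 l2
    assume H: "l1 \<ge> 1 \<and> l2 \<ge> 1 \<and>
          (\<sigma> ^^ k1) a = (\<sigma> ^^ (k1 + l1)) a \<and> (\<sigma> ^^ k2) a = (\<sigma> ^^ (k2 + l2)) a"
    show "(\<sigma> ^^ (min k1 k2)) a = (\<sigma> ^^ (min k1 k2 + gcd l1 l2)) a"
      using H by (intro part2') simp_all
  qed
  show ?thesis by (rule conjI[OF P1 conjI[OF P2 conjI[OF P3 conjI[OF P4 P5]]]])
qed

end
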